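(* Let $C,E\in W^{(l)}\setminus\{0\}$, $m\in\mathbb{N}$ and $(\rho,\sigma)\in\mathfrak V$. If $[C,E]\neq0$, then $[C^m,E]\neq0$ and $\ell_{\rho,\sigma}([C^m,E])=m\,\ell_{\rho,\sigma}(C)^{m-1}\ell_{\rho,\sigma}([C,E])$. Moreover $[C^m,E]_{\rho,\sigma}\neq0$ if and only if $[C,E]_{\rho,\sigma}\neq0$.
   Context: $K$ is a field of characteristic zero, $l\in\mathbb{N}$. $W^{(l)}$ is the associative $K$-algebra with $K$-basis $\{X^{i/l}Y^j:i\in\mathbb{Z},j\in\mathbb{N}_0\}$, powers of $X$ multiplying as Laurent monomials and $[Y,X^\alpha]=\alpha X^{\alpha-1}$ for $\alpha\in\frac1l\mathbb{Z}$. $L^{(l)}=K[x^{\pm1/l},y]$, $\Psi^{(l)}(X^{i/l}Y^j)=x^{i/l}y^j$ ($K$-linear); supports are sets of exponents with nonzero coefficient. $\mathfrak V=\{(\rho,\sigma)\in\mathbb{Z}^2:\gcd(\rho,\sigma)=1,\rho+\sigma>0\}$. For $P\ne0$, $v_{\rho,\sigma}(P)=\max\{\rho a+\sigma b:(a,b)\in\mathrm{Supp}(P)\}$ and $\ell_{\rho,\sigma}(P)\in L^{(l)}$ = sum of terms of $\Psi^{(l)}(P)$ attaining it. $[P,Q]_{\rho,\sigma}:=0$ if $[P,Q]=0$ or $v_{\rho,\sigma}([P,Q])<v_{\rho,\sigma}(P)+v_{\rho,\sigma}(Q)-(\rho+\sigma)$, and $:=\ell_{\rho,\sigma}([P,Q])$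 otherwise. *)

theory Defs
  imports Complex_Main "HOL-Library.Poly_Mapping"
begin

text \<open>An element of W^(l) is represented by its finitely supported coefficient map:
  the basis element X^(i/l) Y^j corresponds to the key (i, j) :: int * nat.
  The same representation is used for L^(l) = K[x^(+-1/l), y], so that Psi^(l) is
  the identity on coefficient maps.\<close>

type_synonym 'a wel = "(int \<times> nat) \<Rightarrow>\<^sub>0 'a"

text \<open>Product of basis elements in W^(l):
  (X^(a/l) Y^j)(X^(b/l) Y^n) = sum_(k<=j) (j choose k) (b/l)(b/l-1)...(b/l-k+1) X^((a+b-kl)/l) Y^(j-k+n),
  which follows from [Y, X^alpha] = alpha X^(alpha-1).\<close>
definition wmono_mult :: "nat \<Rightarrow> int \<times> nat \<Rightarrow> int \<times> nat \<Rightarrow> 'a::field_char_0 wel" where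
  "wmono_mult l p q = (case p of (a, j) \<Rightarrow> case q of (b, n) \<Rightarrow>
     (\<Sum>k\<in>{0..j}. Poly_Mapping.single (a + b - int k * int l, j - k + n)
        (of_nat (j choose k) * (\<Prod>t<k. of_int b / of_nat l - of_nat t))))"

definition wmult :: "nat \<Rightarrow> 'a::field_char_0 wel \<Rightarrow> 'a wel \<Rightarrow> 'a wel" where
  "wmult l P Q = (\<Sum>p\<in>Poly_Mapping.keys P. \<Sum>q\<in>Poly_Mapping.keys Q.
      Poly_Mapping.map (\<lambda>c. Poly_Mapping.lookup P p * Poly_Mapping.lookup Q q * c) (wmono_mult l p q))"

definition wone :: "'a::field_char_0 wel" where
  "wone = Poly_Mapping.single (0, 0) 1"

primrec wpow :: "nat \<Rightarrow> 'a::field_char_0 wel \<Rightarrow> nat \<Rightarrow> 'a wel" where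
  "wpow l P 0 = wone"
| "wpow l P (Suc m) = wmult l P (wpow l P m)"

definition wcomm :: "nat \<Rightarrow> 'a::field_char_0 wel \<Rightarrow> 'a wel \<Rightarrow> 'a wel" where
  "wcomm l P Q = wmult l P Q - wmult l Q P"

definition lmult :: "'a::field_char_0 wel \<Rightarrow> 'a wel \<Rightarrow> 'a wel" where
  "lmult P Q = (\<Sum>p\<in>Poly_Mapping.keys P. \<Sum>q\<in>Poly_Mapping.keys Q.
      Poly_Mapping.single (fst p + fst q, snd p + snd q) (Poly_Mapping.lookup P p * Poly_Mapping.lookup Q q))"

primrec lpow :: "'a::field_char_0 wel \<Rightarrow> nat \<Rightarrow> 'a wel" where
  "lpow P 0 = Poly_Mapping.single (0, 0) 1"
| "lpow P (Suc m) = lmult P (lpow P m)"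

definition lsmult :: "'a::field_char_0 \<Rightarrow> 'a wel \<Rightarrow> 'a wel" where
  "lsmult c P = Poly_Mapping.map (\<lambda>x. c * x) P"

definition wdeg :: "int \<Rightarrow> int \<Rightarrow> nat \<Rightarrow> int \<times> nat \<Rightarrow> rat" where
  "wdeg \<rho> \<sigma> l p = of_int \<rho> * (of_int (fst p) / of_nat l) + of_int \<sigma> * of_nat (snd p)"

definition vdeg :: "int \<Rightarrow> int \<Rightarrow> nat \<Rightarrow> 'a::field_char_0 wel \<Rightarrow> rat" where
  "vdeg \<rho> \<sigma> l P = Max (wdeg \<rho> \<sigma> l ` Poly_Mapping.keys P)"

definition lead :: "int \<Rightarrow> int \<Rightarrow> nat \<Rightarrow> 'a::field_char_0 wel \<Rightarrow> 'a wel" where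
  "lead \<rho> \<sigma> l P = (\<Sum>p\<in>{p\<in>Poly_Mapping.keys P. wdeg \<rho> \<sigma> l p = vdeg \<rho> \<sigma> l P}.
      Poly_Mapping.single p (Poly_Mapping.lookup P p))"

definition wbracket :: "int \<Rightarrow> int \<Rightarrow> nat \<Rightarrow> 'a::field_char_0 wel \<Rightarrow> 'a wel \<Rightarrow> 'a wel" where
  "wbracket \<rho> \<sigma> l P Q =
     (if wcomm l P Q = 0 \<or>
         vdeg \<rho> \<sigma> l (wcomm l P Q) < vdeg \<rho> \<sigma> l P + vdeg \<rho> \<sigma> l Q - of_int (\<rho> + \<sigma>)
      then 0 else lead \<rho> \<sigma> l (wcomm l P Q))"

end

theory Submission
  imports Defs "HOL-Library.Product_Plus" "HOL-Library.Product_Lexorder" "HOL-Computational_Algebra.Formal_Power_Series"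
begin

lemma lookup_map_mult: "Poly_Mapping.lookup (Poly_Mapping.map (\<lambda>c. a * c) p) k = (a::'a::comm_ring_1) * Poly_Mapping.lookup p k"
  by (simp add: Poly_Mapping.map.rep_eq when_def)

definition ext :: "('k \<Rightarrow> ('m \<Rightarrow>\<^sub>0 'a::comm_ring_1)) \<Rightarrow> ('k \<Rightarrow>\<^sub>0 'a) \<Rightarrow> ('m \<Rightarrow>\<^sub>0 'a)" where
  "ext f P = (\<Sum>x\<in>Poly_Mapping.keys P. Poly_Mapping.map (\<lambda>c. Poly_Mapping.lookup P x * c) (f x))"

lemma lookup_ext: "Poly_Mapping.lookup (ext f P) k = (\<Sum>x\<in>Poly_Mapping.keys P. Poly_Mapping.lookup P x * Poly_Mapping.lookup (f x) k)"
  by (simp add: ext_def lookup_sum lookup_map_mult)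

lemma lookup_ext_sup: assumes "finite A" "Poly_Mapping.keys P \<subseteq> A"
  shows "Poly_Mapping.lookup (ext f P) k = (\<Sum>x\<in>A. Poly_Mapping.lookup P x * Poly_Mapping.lookup (f x) k)"
  unfolding lookup_ext by (rule sum.mono_neutral_left) (use assms in \<open>auto simp: in_keys_iff\<close>)

lemma ext_add: "ext f (P + Q) = ext f P + ext f Q"
proof (rule poly_mapping_eqI)
  fix k
  let ?A = "Poly_Mapping.keys P \<union> Poly_Mapping.keys Q"
  have f: "finite ?A" by simp
  have "Poly_Mapping.keys (P + Q) \<subseteq> ?A" by (rule keys_add)
  then show "Poly_Mapping.lookup (ext f (P + Q)) k = Poly_Mapping.lookup (ext f P + ext f Q) k"
    by (simp add: lookup_add lookup_ext_sup[OF f] distrib_right sum.distrib)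
qed

lemma ext_diff: "ext f (P - Q) = ext f P - ext f Q"
proof (rule poly_mapping_eqI)
  fix k
  let ?A = "Poly_Mapping.keys P \<union> Poly_Mapping.keys Q"
  have f: "finite ?A" by simp
  have "Poly_Mapping.keys (P - Q) \<subseteq> ?A" by (auto simp: in_keys_iff lookup_minus)
  then show "Poly_Mapping.lookup (ext f (P - Q)) k = Poly_Mapping.lookup (ext f P - ext f Q) k"
    by (simp add: lookup_minus lookup_ext_sup[OF f] left_diff_distrib sum_subtractf)
qed

lemma ext_zero[simp]: "ext f 0 = 0"
  by (simp add: ext_def)

lemma ext_sum: "finite S \<Longrightarrow> ext f (sum g S) = (\<Sum>s\<in>S. ext f (g s))"
  by (induction S rule: finite_induct) (simp_all add: ext_add)

lemma ext_single: "ext f (Poly_Mapping.single x c) = Poly_Mapping.map (\<lambda>d. c * d) (f x)"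
  by (rule poly_mapping_eqI) (simp add: lookup_ext lookup_map_mult)

lemma ext_fadd: "ext (\<lambda>x. f x + g x) P = ext f P + ext g P"
  by (rule poly_mapping_eqI) (simp add: lookup_ext lookup_add distrib_left sum.distrib)

lemma ext_fdiff: "ext (\<lambda>x. f x - g x) P = ext f P - ext g P"
  by (rule poly_mapping_eqI) (simp add: lookup_ext lookup_minus right_diff_distrib sum_subtractf)

lemma ext_cong: "(\<And>x. x \<in> Poly_Mapping.keys P \<Longrightarrow> f x = g x) \<Longrightarrow> ext f P = ext g P"
  by (simp add: ext_def)

lemma ext_comp: "ext h (ext f P) = ext (\<lambda>x. ext h (f x)) P"
proof (rule poly_mapping_eqI)
  fix k
  let ?Y = "Poly_Mapping.keys (ext f P) \<union> (\<Union>x\<in>Poly_Mapping.keys P. Poly_Mapping.keys (f x))"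
  have fY: "finite ?Y" by simp
  have "Poly_Mapping.lookup (ext h (ext f P)) k
      = (\<Sum>y\<in>?Y. Poly_Mapping.lookup (ext f P) y * Poly_Mapping.lookup (h y) k)"
    by (rule lookup_ext_sup[OF fY]) auto
  also have "\<dots> = (\<Sum>y\<in>?Y. \<Sum>x\<in>Poly_Mapping.keys P. Poly_Mapping.lookup P x * (Poly_Mapping.lookup (f x) y * Poly_Mapping.lookup (h y) k))"
    by (simp add: lookup_ext sum_distrib_right mult.assoc)
  also have "\<dots> = (\<Sum>x\<in>Poly_Mapping.keys P. Poly_Mapping.lookup P x * (\<Sum>y\<in>?Y. Poly_Mapping.lookup (f x) y * Poly_Mapping.lookup (h y) k))"
    by (subst sum.swap) (simp add: sum_distrib_left)
  also have "\<dots> = (\<Sum>x\<in>Poly_Mapping.keys P. Poly_Mapping.lookup P x * Poly_Mapping.lookup (ext h (f x)) k)"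
    by (rule sum.cong[OF refl], subst lookup_ext_sup[OF fY]) auto
  finally show "Poly_Mapping.lookup (ext h (ext f P)) k = Poly_Mapping.lookup (ext (\<lambda>x. ext h (f x)) P) k"
    by (simp add: lookup_ext)
qed

lemma ext_swap: "ext (\<lambda>a. ext (\<lambda>b. g a b) B) A = ext (\<lambda>b. ext (\<lambda>a. g a b) A) B"
  by (rule poly_mapping_eqI) (simp add: lookup_ext sum_distrib_left mult.left_commute sum.swap[of _ "Poly_Mapping.keys A"])

definition ff :: "'a::field_char_0 \<Rightarrow> nat \<Rightarrow> 'a" where
  "ff x k = (\<Prod>t<k. x - of_nat t)"

lemma ff_fact: "ff x k = fact k * (x gchoose k)"
  by (simp add: ff_def gbinomial_mult_fact atLeast0LessThan)

lemma ff_vandermonde: "ff (x + y) j = (\<Sum>k\<in>{0..j}. of_nat (j choose k) * ff y k * ff x (j - k))"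
proof -
  have "ff (x + y) j = fact j * (\<Sum>k\<in>{0..j}. (y gchoose k) * (x gchoose (j - k)))"
    using gbinomial_Vandermonde[of y x j] by (simp add: ff_fact add.commute)
  also have "\<dots> = (\<Sum>k\<in>{0..j}. of_nat (j choose k) * ff y k * ff x (j - k))"
    unfolding sum_distrib_left
  proof (rule sum.cong[OF refl])
    fix k assume "k \<in> {0..j}"
    then have kj: "k \<le> j" by simp
    have "(of_nat (j choose k) :: 'a) = fact j / (fact k * fact (j - k))"
      using binomial_fact[OF kj] by simp
    then show "fact j * ((y gchoose k) * (x gchoose (j - k))) = of_nat (j choose k) * ff y k * ff x (j - k)"
      by (simp add: ff_fact field_simps)
  qed
  finally show ?thesis .
qed

lemma ff_add: "ff u (m + n) = ff u n * ff (u - of_nat n) m"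
  by (induction m) (simp_all add: ff_def algebra_simps)

definition opm :: "nat \<Rightarrow> int \<times> nat \<Rightarrow> int \<Rightarrow> (int \<Rightarrow>\<^sub>0 'a::field_char_0)" where
  "opm l x c = Poly_Mapping.single (c + fst x - int (snd x) * int l) (ff (of_int c / of_nat l) (snd x))"

definition wop :: "nat \<Rightarrow> 'a::field_char_0 wel \<Rightarrow> int \<Rightarrow> (int \<Rightarrow>\<^sub>0 'a)" where
  "wop l P c = ext (\<lambda>x. opm l x c) P"

lemma sum_single: "finite S \<Longrightarrow> (\<Sum>k\<in>S. Poly_Mapping.single E (g k)) = Poly_Mapping.single E (\<Sum>k\<in>S. g k)"
  by (induction S rule: finite_induct) (simp_all add: single_add)

lemma map_mult_single: "Poly_Mapping.map (\<lambda>d. c * d) (Poly_Mapping.single x a) = Poly_Mapping.single x (c * (a::'a::comm_ring_1))"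
  by (simp add: map_single)

lemma core:
  assumes l: "l \<ge> 1"
  shows "wop l (wmono_mult l p q :: 'a::field_char_0 wel) c = ext (\<lambda>e. opm l p e) (opm l q c)"
proof -
  obtain a j where p: "p = (a, j)" by (cases p)
  obtain b n where q: "q = (b, n)" by (cases q)
  define u :: 'a where "u = of_int c / of_nat l"
  define v :: 'a where "v = of_int b / of_nat l"
  define E where "E = c + a + b - int (j + n) * int l"
  have lpos: "(of_nat l :: 'a) \<noteq> 0" using l by simp
  have LHS: "wop l (wmono_mult l p q :: 'a wel) c
      = Poly_Mapping.single E (\<Sum>k\<in>{0..j}. of_nat (j choose k) * ff v k * ff u (j - k + n))"
    unfolding wop_def wmono_mult_def p q prod.simps
    apply (subst ext_sum, simp)
    apply (simp add: ext_single opm_def map_mult_single)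
    apply (subst sum_single[symmetric], simp)
    apply (rule sum.cong[OF refl])
    apply (simp add: ff_def[symmetric] u_def v_def E_def of_nat_diff algebra_simps)
    done
  define e0 where "e0 = c + b - int n * int l"
  have e0: "(of_int e0 :: 'a) / of_nat l = (u - of_nat n) + v"
    using lpos by (simp add: e0_def u_def v_def field_simps)
  have RHS: "ext (\<lambda>e. opm l p e) (opm l q c :: int \<Rightarrow>\<^sub>0 'a)
      = Poly_Mapping.single E (ff u n * ff ((u - of_nat n) + v) j)"
  proof -
    have ee: "(of_int b + of_int c - of_nat l * of_nat n) / (of_nat l :: 'a) = u + v - of_nat n"
      using lpos by (simp add: u_def v_def field_simps)
    show ?thesis unfolding opm_def p q
      by (simp add: ext_single map_mult_single u_def[symmetric] E_def algebra_simps ee)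
  qed
  have "(\<Sum>k\<in>{0..j}. of_nat (j choose k) * ff v k * ff u (j - k + n))
      = ff u n * (\<Sum>k\<in>{0..j}. of_nat (j choose k) * ff v k * ff (u - of_nat n) (j - k))"
    unfolding sum_distrib_left
  proof (rule sum.cong[OF refl])
    fix k assume "k \<in> {0..j}"
    then have "j - k + n = (j - k) + n" by simp
    then show "of_nat (j choose k) * ff v k * ff u (j - k + n) = ff u n * (of_nat (j choose k) * ff v k * ff (u - of_nat n) (j - k))"
      by (simp only: ff_add) (simp add: mult_ac)
  qed
  also have "\<dots> = ff u n * ff ((u - of_nat n) + v) j"
    by (simp add: ff_vandermonde)
  finally show ?thesis using LHS RHS by simp
qed

lemma wmult_ext: "wmult l X Y = ext (\<lambda>p. ext (\<lambda>q. wmono_mult l p q) Y) X"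
  by (rule poly_mapping_eqI)
     (simp only: wmult_def lookup_ext lookup_sum lookup_map_mult, simp add: sum_distrib_left mult.assoc)

definition wapp :: "nat \<Rightarrow> 'a::field_char_0 wel \<Rightarrow> (int \<Rightarrow>\<^sub>0 'a) \<Rightarrow> (int \<Rightarrow>\<^sub>0 'a)" where
  "wapp l X f = ext (\<lambda>e. wop l X e) f"

lemma wop_mult: assumes l: "l \<ge> 1"
  shows "wop l (wmult l X Y) c = wapp l X (wop l Y c)"
proof -
  have "wop l (wmult l X Y) c = ext (\<lambda>p. ext (\<lambda>q. wop l (wmono_mult l p q) c) Y) X"
    unfolding wop_def wmult_ext ext_comp ..
  also have "\<dots> = ext (\<lambda>p. ext (\<lambda>q. ext (\<lambda>e. opm l p e) (opm l q c)) Y) X"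
    by (simp add: core[OF l])
  also have "\<dots> = ext (\<lambda>q. ext (\<lambda>p. ext (\<lambda>e. opm l p e) (opm l q c)) X) Y"
    by (rule ext_swap)
  also have "\<dots> = ext (\<lambda>q. ext (\<lambda>e. ext (\<lambda>x. opm l x e) X) (opm l q c)) Y"
    by (simp add: ext_swap[of _ X])
  also have "\<dots> = wapp l X (wop l Y c)"
    unfolding wapp_def wop_def ext_comp ..
  finally show ?thesis .
qed

lemma wapp_mult: assumes l: "l \<ge> 1"
  shows "wapp l (wmult l P Q) f = wapp l P (wapp l Q f)"
  unfolding wapp_def wop_mult[OF l] ext_comp ..

lemma ff_nat_zero: "n < j \<Longrightarrow> ff (of_nat n :: 'a::field_char_0) j = 0"
  unfolding ff_def by (rule prod_zero) auto

lemma ff_nat_nz: "ff (of_nat n :: 'a::field_char_0) n \<noteq> 0"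
  unfolding ff_def by (subst prod_zero_iff) auto

lemma lookup_opm: "Poly_Mapping.lookup (opm l x c) d =
   (if d = c + fst x - int (snd x) * int l then ff (of_int c / of_nat l) (snd x) else 0)"
  by (simp add: opm_def lookup_single)

lemma wop_inj0:
  assumes l: "l \<ge> 1" and z: "\<And>c. wop l R c = (0 :: int \<Rightarrow>\<^sub>0 'a::field_char_0)"
  shows "R = 0"
proof (rule ccontr)
  assume "R \<noteq> 0"
  then obtain y where y: "y \<in> Poly_Mapping.keys R" by (metis keys_eq_empty ex_in_conv)
  define sh where "sh x = fst x - int (snd x) * int l" for x :: "int \<times> nat"
  define S where "S = {x \<in> Poly_Mapping.keys R. sh x = sh y}"
  have yS: "y \<in> S" using y by (simp add: S_def)
  have "finite S" by (simp add: S_def)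
  have "S \<noteq> {}" using yS by auto
  define m where "m = (LEAST k. \<exists>x\<in>S. snd x = k)"
  have "\<exists>x\<in>S. snd x = m" unfolding m_def by (rule LeastI_ex) (use yS in blast)
  then obtain x0 where x0: "x0 \<in> S" and x0m: "snd x0 = m" by blast
  have min: "snd x0 \<le> snd x" if "x \<in> S" for x
    unfolding x0m m_def by (rule Least_le) (use that in blast)
  define j0 where "j0 = snd x0"
  define c where "c = int j0 * int l"
  have lpos: "(of_nat l :: 'a) \<noteq> 0" using l by simp
  have cl: "(of_int c :: 'a) / of_nat l = of_nat j0" using lpos by (simp add: c_def)
  have "Poly_Mapping.lookup (wop l R c) (c + sh x0) =
      (\<Sum>x\<in>Poly_Mapping.keys R. Poly_Mapping.lookup R x * (if sh x = sh x0 then ff (of_nat j0 :: 'a) (snd x) else 0))"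
    unfolding wop_def lookup_ext lookup_opm cl by (rule sum.cong) (auto simp: sh_def)
  also have "\<dots> = Poly_Mapping.lookup R x0 * ff (of_nat j0) (snd x0)"
  proof -
    have "x0 \<in> Poly_Mapping.keys R" using x0 by (simp add: S_def)
    moreover have "\<And>x. x \<in> Poly_Mapping.keys R \<Longrightarrow> x \<noteq> x0 \<Longrightarrow>
        Poly_Mapping.lookup R x * (if sh x = sh x0 then ff (of_nat j0 :: 'a) (snd x) else 0) = 0"
    proof -
      fix x assume xR: "x \<in> Poly_Mapping.keys R" and ne: "x \<noteq> x0"
      show "Poly_Mapping.lookup R x * (if sh x = sh x0 then ff (of_nat j0 :: 'a) (snd x) else 0) = 0"
      proof (cases "sh x = sh x0")
        case True
        then have "x \<in> S" using xR x0 by (simp add: S_def)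
        then have "j0 \<le> snd x" using min by (simp add: j0_def)
        moreover have "snd x \<noteq> j0"
        proof
          assume "snd x = j0"
          then have "fst x = fst x0" using True by (simp add: sh_def j0_def)
          then show False using ne \<open>snd x = j0\<close> by (simp add: j0_def prod_eq_iff)
        qed
        ultimately have "ff (of_nat j0 :: 'a) (snd x) = 0" by (intro ff_nat_zero) simp
        then show ?thesis using True by simp
      qed simp
    qed
    ultimately show ?thesis
    proof -
      assume x0R: "x0 \<in> Poly_Mapping.keys R" and rest: "\<And>x. x \<in> Poly_Mapping.keys R \<Longrightarrow> x \<noteq> x0 \<Longrightarrow>
        Poly_Mapping.lookup R x * (if sh x = sh x0 then ff (of_nat j0 :: 'a) (snd x) else 0) = 0"
      have "(\<Sum>x\<in>Poly_Mapping.keys R - {x0}. Poly_Mapping.lookup R x * (if sh x = sh x0 then ff (of_nat j0 :: 'a) (snd x) else 0)) = 0"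
        by (rule sum.neutral) (use rest in blast)
      then show ?thesis
        using sum.remove[OF finite_keys x0R, of "\<lambda>x. Poly_Mapping.lookup R x * (if sh x = sh x0 then ff (of_nat j0 :: 'a) (snd x) else 0)"]
        by (simp add: j0_def)
    qed
  qed
  finally have "Poly_Mapping.lookup (wop l R c) (c + sh x0) = Poly_Mapping.lookup R x0 * ff (of_nat j0) j0"
    by (simp add: j0_def)
  moreover have "Poly_Mapping.lookup R x0 \<noteq> 0" using x0 by (simp add: S_def in_keys_iff)
  ultimately have "Poly_Mapping.lookup (wop l R c) (c + sh x0) \<noteq> 0" using ff_nat_nz[of j0] by simp
  then show False using z by simp
qed

lemma wop_diff: "wop l (P - Q) c = wop l P c - wop l Q c"
  by (simp add: wop_def ext_diff)

lemma wop_inj: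
  assumes l: "l \<ge> 1" and z: "\<And>c. wop l P c = (wop l Q c :: int \<Rightarrow>\<^sub>0 'a::field_char_0)"
  shows "P = Q"
  using wop_inj0[OF l, of "P - Q"] z by (simp add: wop_diff)

lemma wmult_assoc: assumes l: "l \<ge> 1"
  shows "wmult l (wmult l P Q) R = wmult l P (wmult l Q (R :: 'a::field_char_0 wel))"
  by (rule wop_inj[OF l]) (simp add: wop_mult[OF l] wapp_mult[OF l])

instance prod :: (ordered_cancel_comm_monoid_add, ordered_cancel_comm_monoid_add) ordered_cancel_comm_monoid_add
proof
  fix a b c :: "'a \<times> 'b"
  assume "a \<le> b"
  then show "c + a \<le> c + b"
    by (cases a, cases b, cases c) (auto simp: less_eq_prod_def add_strict_left_mono add_left_mono)
qed

lemma idom_test: "(x::(int \<times> nat) \<Rightarrow>\<^sub>0 'a::field_char_0) \<noteq> 0 \<Longrightarrow> y \<noteq> 0 \<Longrightarrow> x * y \<noteq> 0"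
  by simp

lemma wmult_add_left: "wmult l (P + Q) R = wmult l P R + wmult l Q R"
  by (simp add: wmult_ext ext_add)
lemma wmult_add_right: "wmult l P (Q + R) = wmult l P Q + wmult l P R"
  by (simp add: wmult_ext ext_add ext_fadd)
lemma wmult_diff_left: "wmult l (P - Q) R = wmult l P R - wmult l Q R"
  by (simp add: wmult_ext ext_diff)
lemma wmult_diff_right: "wmult l P (Q - R) = wmult l P Q - wmult l P R"
  by (simp add: wmult_ext ext_diff ext_fdiff)

lemma wop_one: "wop l (wone :: 'a::field_char_0 wel) c = Poly_Mapping.single c 1"
  by (simp add: wop_def wone_def ext_single opm_def ff_def map_mult_single)

lemma ext_single_one: "ext f (Poly_Mapping.single c 1) = f c"
  by (rule poly_mapping_eqI) (simp add: lookup_ext)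

lemma wmult_one: assumes l: "l \<ge> 1" shows "wmult l P (wone :: 'a::field_char_0 wel) = P"
  by (rule wop_inj[OF l]) (simp add: wop_mult[OF l] wop_one wapp_def ext_single_one)

lemma comm_step: assumes l: "l \<ge> 1"
  shows "wcomm l (wpow l C (Suc m)) E = wmult l C (wcomm l (wpow l C m) E) + wmult l (wcomm l C E) (wpow l C m)"
  by (simp add: wcomm_def wmult_diff_left wmult_diff_right wmult_assoc[OF l])

definition hp :: "int \<Rightarrow> int \<Rightarrow> nat \<Rightarrow> rat \<Rightarrow> 'a::field_char_0 wel \<Rightarrow> 'a wel" where
  "hp \<rho> \<sigma> l V P = ext (\<lambda>k. if wdeg \<rho> \<sigma> l k = V then Poly_Mapping.single k 1 else 0) P"

definition bnd :: "int \<Rightarrow> int \<Rightarrow> nat \<Rightarrow> rat \<Rightarrow> 'a::field_char_0 wel \<Rightarrow> bool" where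
  "bnd \<rho> \<sigma> l V P = (\<forall>k\<in>Poly_Mapping.keys P. wdeg \<rho> \<sigma> l k \<le> V)"

lemma map_mult_zero: "Poly_Mapping.map f 0 = 0"
  by (rule poly_mapping_eqI) (simp add: Poly_Mapping.map.rep_eq)

lemma lookup_hp: "Poly_Mapping.lookup (hp \<rho> \<sigma> l V P) k = (if wdeg \<rho> \<sigma> l k = V then Poly_Mapping.lookup P k else 0)"
proof -
  have "Poly_Mapping.lookup (hp \<rho> \<sigma> l V P) k = (\<Sum>x\<in>Poly_Mapping.keys P. if x = k then (if wdeg \<rho> \<sigma> l k = V then Poly_Mapping.lookup P k else 0) else 0)"
    unfolding hp_def lookup_ext by (rule sum.cong) (auto simp: lookup_single)
  also have "\<dots> = (if wdeg \<rho> \<sigma> l k = V then Poly_Mapping.lookup P k else 0)"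
    by (simp add: in_keys_iff)
  finally show ?thesis .
qed

lemma hp_add: "hp \<rho> \<sigma> l V (P + Q) = hp \<rho> \<sigma> l V P + hp \<rho> \<sigma> l V Q"
  by (simp add: hp_def ext_add)
lemma hp_zero[simp]: "hp \<rho> \<sigma> l V 0 = 0"
  by (simp add: hp_def)
lemma hp_single: "hp \<rho> \<sigma> l V (Poly_Mapping.single x c) = (if wdeg \<rho> \<sigma> l x = V then Poly_Mapping.single x c else 0)"
  by (simp add: hp_def ext_single map_mult_single map_mult_zero)
lemma hp_sum: "finite S \<Longrightarrow> hp \<rho> \<sigma> l V (sum g S) = (\<Sum>s\<in>S. hp \<rho> \<sigma> l V (g s))"
  by (simp add: hp_def ext_sum)

lemma bnd_add: "bnd \<rho> \<sigma> l V P \<Longrightarrow> bnd \<rho> \<sigma> l V Q \<Longrightarrow> bnd \<rho> \<sigma> l V (P + Q)"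
  unfolding bnd_def using keys_add[of P Q] by blast

lemma bnd_mono: "bnd \<rho> \<sigma> l V P \<Longrightarrow> V \<le> W \<Longrightarrow> bnd \<rho> \<sigma> l W P"
  unfolding bnd_def by force

lemma hp_lt: "bnd \<rho> \<sigma> l V' P \<Longrightarrow> V' < V \<Longrightarrow> hp \<rho> \<sigma> l V P = 0"
proof (rule poly_mapping_eqI)
  fix k assume b: "bnd \<rho> \<sigma> l V' P" and lt: "V' < V"
  show "Poly_Mapping.lookup (hp \<rho> \<sigma> l V P) k = Poly_Mapping.lookup 0 k"
  proof (cases "k \<in> Poly_Mapping.keys P")
    case True
    then have "wdeg \<rho> \<sigma> l k \<le> V'" using b by (simp add: bnd_def)
    then show ?thesis using lt by (simp add: lookup_hp)
  next
    case False then show ?thesis by (simp add: lookup_hp in_keys_iff)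
  qed
qed

lemma keys_ext: "Poly_Mapping.keys (ext f P) \<subseteq> (\<Union>x\<in>Poly_Mapping.keys P. Poly_Mapping.keys (f x))"
proof
  fix k assume "k \<in> Poly_Mapping.keys (ext f P)"
  then have "(\<Sum>x\<in>Poly_Mapping.keys P. Poly_Mapping.lookup P x * Poly_Mapping.lookup (f x) k) \<noteq> 0"
    by (simp add: in_keys_iff lookup_ext)
  then obtain x where "x \<in> Poly_Mapping.keys P" "Poly_Mapping.lookup P x * Poly_Mapping.lookup (f x) k \<noteq> 0"
    by (meson sum.not_neutral_contains_not_neutral)
  then have "x \<in> Poly_Mapping.keys P" "k \<in> Poly_Mapping.keys (f x)" by (auto simp: in_keys_iff)
  then show "k \<in> (\<Union>x\<in>Poly_Mapping.keys P. Poly_Mapping.keys (f x))" by blast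
qed

lemma bnd_ext: "(\<And>x. x \<in> Poly_Mapping.keys P \<Longrightarrow> bnd \<rho> \<sigma> l V (f x)) \<Longrightarrow> bnd \<rho> \<sigma> l V (ext f P)"
  unfolding bnd_def using keys_ext[of f P] by blast

lemma wdeg_shift:
  assumes l: "l \<ge> 1" and kj: "k \<le> j"
  shows "wdeg \<rho> \<sigma> l (a + b - int k * int l, j - k + n) = wdeg \<rho> \<sigma> l (a, j) + wdeg \<rho> \<sigma> l (b, n) - of_nat k * of_int (\<rho> + \<sigma>)"
proof -
  have lpos: "(of_nat l :: rat) \<noteq> 0" using l by simp
  have "of_int (a + b - int k * int l) / (of_nat l :: rat) = of_int a / of_nat l + of_int b / of_nat l - of_nat k"
    using lpos by (simp add: field_simps)
  moreover have "(of_nat (j - k + n) :: rat) = of_nat j + of_nat n - of_nat k" using kj by (simp add: of_nat_diff)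
  ultimately show ?thesis unfolding wdeg_def fst_conv snd_conv by (simp only:) (simp add: algebra_simps)
qed

lemma wmono_deg:
  assumes l: "l \<ge> 1" and rs: "\<rho> + \<sigma> > 0"
  shows "bnd \<rho> \<sigma> l (wdeg \<rho> \<sigma> l p + wdeg \<rho> \<sigma> l q) (wmono_mult l p q :: 'a::field_char_0 wel)
    \<and> hp \<rho> \<sigma> l (wdeg \<rho> \<sigma> l p + wdeg \<rho> \<sigma> l q) (wmono_mult l p q :: 'a wel) = Poly_Mapping.single (p + q) 1"
proof -
  obtain a j where p: "p = (a, j)" by (cases p)
  obtain b n where q: "q = (b, n)" by (cases q)
  let ?V = "wdeg \<rho> \<sigma> l (a, j) + wdeg \<rho> \<sigma> l (b, n)"
  let ?key = "\<lambda>k. (a + b - int k * int l, j - k + n)"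
  let ?co = "\<lambda>k. (of_nat (j choose k) * (\<Prod>t<k. of_int b / of_nat l - of_nat t) :: 'a)"
  have W: "wmono_mult l p q = (\<Sum>k\<in>{0..j}. Poly_Mapping.single (?key k) (?co k))"
    by (simp add: wmono_mult_def p q)
  have dk: "wdeg \<rho> \<sigma> l (?key k) = ?V - of_nat k * of_int (\<rho> + \<sigma>)" if "k \<in> {0..j}" for k
    using wdeg_shift[OF l, of k j] that by simp
  have B: "bnd \<rho> \<sigma> l ?V (wmono_mult l p q :: 'a wel)"
    unfolding bnd_def
  proof
    fix x assume "x \<in> Poly_Mapping.keys (wmono_mult l p q :: 'a wel)"
    then obtain k where "k \<in> {0..j}" "x = ?key k"
      using keys_sum[of "\<lambda>k. Poly_Mapping.single (?key k) (?co k)" "{0..j}"] unfolding W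
      by (auto split: if_splits)
    then show "wdeg \<rho> \<sigma> l x \<le> ?V" using dk rs by simp
  qed
  have "hp \<rho> \<sigma> l ?V (wmono_mult l p q :: 'a wel) = (\<Sum>k\<in>{0..j}. if k = 0 then Poly_Mapping.single (?key k) (?co k) else 0)"
    unfolding W hp_sum[OF finite_atLeastAtMost] hp_single
  proof (rule sum.cong[OF refl])
    fix k assume kj: "k \<in> {0..j}"
    have "(wdeg \<rho> \<sigma> l (?key k) = ?V) = (k = 0)" using dk[OF kj] rs by simp
    then show "(if wdeg \<rho> \<sigma> l (?key k) = ?V then Poly_Mapping.single (?key k) (?co k) else 0)
      = (if k = 0 then Poly_Mapping.single (?key k) (?co k) else 0)" by simp
  qed
  also have "\<dots> = Poly_Mapping.single (p + q) 1"
    by (simp add: p q)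
  finally show ?thesis using B by (simp add: p q)
qed

lemma ext_mult_left: "ext h f * g = ext (\<lambda>x. h x * g) (f :: 'k \<Rightarrow>\<^sub>0 'a::field_char_0)"
  unfolding ext_def sum_distrib_right
  by (rule sum.cong[OF refl]) (simp add: mult_map_scale_conv_mult mult.assoc)

lemma ext_mult_right: "(g :: 'm::comm_monoid_add \<Rightarrow>\<^sub>0 'a) * ext h f = ext (\<lambda>x. g * h x) (f :: 'k \<Rightarrow>\<^sub>0 'a::field_char_0)"
  unfolding ext_def sum_distrib_left
  by (rule sum.cong[OF refl]) (simp add: mult_map_scale_conv_mult mult.left_commute)

lemma ext_id: "ext (\<lambda>x. Poly_Mapping.single x 1) P = P"
proof (rule poly_mapping_eqI)
  fix k
  have "(\<Sum>x\<in>Poly_Mapping.keys P. Poly_Mapping.lookup P x * Poly_Mapping.lookup (Poly_Mapping.single x 1) k)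
     = (\<Sum>x\<in>Poly_Mapping.keys P. if x = k then Poly_Mapping.lookup P x else 0)"
    by (rule sum.cong) (auto simp: lookup_single)
  also have "\<dots> = Poly_Mapping.lookup P k" by (simp add: in_keys_iff)
  finally show "Poly_Mapping.lookup (ext (\<lambda>x. Poly_Mapping.single x 1) P) k = Poly_Mapping.lookup P k"
    by (simp add: lookup_ext)
qed

lemma hp_ext: "hp \<rho> \<sigma> l V (ext f X) = ext (\<lambda>x. hp \<rho> \<sigma> l V (f x)) X"
  unfolding hp_def ext_comp ..

lemma wmult_deg:
  assumes l: "l \<ge> 1" and rs: "\<rho> + \<sigma> > 0"
    and bP: "bnd \<rho> \<sigma> l a P" and bQ: "bnd \<rho> \<sigma> l b (Q :: 'a::field_char_0 wel)"
  shows "bnd \<rho> \<sigma> l (a + b) (wmult l P Q) \<and> hp \<rho> \<sigma> l (a + b) (wmult l P Q) = hp \<rho> \<sigma> l a P * hp \<rho> \<sigma> l b Q"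
proof
  show "bnd \<rho> \<sigma> l (a + b) (wmult l P Q)"
    unfolding wmult_ext
  proof (intro bnd_ext)
    fix p q assume p: "p \<in> Poly_Mapping.keys P" and q: "q \<in> Poly_Mapping.keys Q"
    have pa: "wdeg \<rho> \<sigma> l p \<le> a" and qb: "wdeg \<rho> \<sigma> l q \<le> b" using p q bP bQ by (auto simp: bnd_def)
    have W: "bnd \<rho> \<sigma> l (wdeg \<rho> \<sigma> l p + wdeg \<rho> \<sigma> l q) (wmono_mult l p q :: 'a wel)"
      using wmono_deg[OF l rs, of p q] by blast
    show "bnd \<rho> \<sigma> l (a + b) (wmono_mult l p q :: 'a wel)"
      by (rule bnd_mono[OF W]) (rule add_mono[OF pa qb])
  qed
  have "hp \<rho> \<sigma> l (a + b) (wmult l P Q) = ext (\<lambda>p. ext (\<lambda>q. hp \<rho> \<sigma> l (a + b) (wmono_mult l p q)) Q) P"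
    unfolding wmult_ext hp_ext ..
  also have "\<dots> = ext (\<lambda>p. ext (\<lambda>q. (if wdeg \<rho> \<sigma> l p = a then Poly_Mapping.single p 1 else 0) *
        (if wdeg \<rho> \<sigma> l q = b then Poly_Mapping.single q 1 else 0)) Q) P"
  proof (intro ext_cong)
    fix p q assume p: "p \<in> Poly_Mapping.keys P" and q: "q \<in> Poly_Mapping.keys Q"
    have pa: "wdeg \<rho> \<sigma> l p \<le> a" and qb: "wdeg \<rho> \<sigma> l q \<le> b" using p q bP bQ by (auto simp: bnd_def)
    note W = wmono_deg[OF l rs, of p q, where 'a='a]
    show "hp \<rho> \<sigma> l (a + b) (wmono_mult l p q :: 'a wel) = (if wdeg \<rho> \<sigma> l p = a then Poly_Mapping.single p 1 else 0) *
        (if wdeg \<rho> \<sigma> l q = b then Poly_Mapping.single q 1 else 0)"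
    proof (cases "wdeg \<rho> \<sigma> l p = a \<and> wdeg \<rho> \<sigma> l q = b")
      case True
      then show ?thesis using W by (simp add: mult_single)
    next
      case False
      then have "wdeg \<rho> \<sigma> l p + wdeg \<rho> \<sigma> l q < a + b" using pa qb by linarith
      then have "hp \<rho> \<sigma> l (a + b) (wmono_mult l p q :: 'a wel) = 0" using W hp_lt by blast
      then show ?thesis using False by auto
    qed
  qed
  also have "\<dots> = hp \<rho> \<sigma> l a P * hp \<rho> \<sigma> l b Q"
    unfolding hp_def by (subst ext_mult_left, subst ext_mult_right) (rule refl)
  finally show "hp \<rho> \<sigma> l (a + b) (wmult l P Q) = hp \<rho> \<sigma> l a P * hp \<rho> \<sigma> l b Q" .
qed

lemma lead_hp:
  assumes "P \<noteq> 0"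
  shows "lead \<rho> \<sigma> l P = hp \<rho> \<sigma> l (vdeg \<rho> \<sigma> l P) P \<and> bnd \<rho> \<sigma> l (vdeg \<rho> \<sigma> l P) P"
proof
  show "bnd \<rho> \<sigma> l (vdeg \<rho> \<sigma> l P) P"
    unfolding bnd_def vdeg_def by (auto intro: Max_ge)
  show "lead \<rho> \<sigma> l P = hp \<rho> \<sigma> l (vdeg \<rho> \<sigma> l P) P"
  proof (rule poly_mapping_eqI)
    fix k
    show "Poly_Mapping.lookup (lead \<rho> \<sigma> l P) k = Poly_Mapping.lookup (hp \<rho> \<sigma> l (vdeg \<rho> \<sigma> l P) P) k"
      unfolding lead_def lookup_sum lookup_hp
      by (simp add: lookup_single when_def in_keys_iff)
  qed
qed

lemma lead_nz:
  assumes "P \<noteq> 0"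
  shows "lead \<rho> \<sigma> l P \<noteq> 0"
proof -
  have ne: "Poly_Mapping.keys P \<noteq> {}" using assms by simp
  have "vdeg \<rho> \<sigma> l P \<in> wdeg \<rho> \<sigma> l ` Poly_Mapping.keys P"
    unfolding vdeg_def using ne by (intro Max_in) auto
  then obtain k where k: "k \<in> Poly_Mapping.keys P" "wdeg \<rho> \<sigma> l k = vdeg \<rho> \<sigma> l P" by auto
  then have "Poly_Mapping.lookup (hp \<rho> \<sigma> l (vdeg \<rho> \<sigma> l P) P) k \<noteq> 0"
    by (simp add: lookup_hp in_keys_iff)
  then show ?thesis using lead_hp[OF assms] by auto
qed

lemma hp_char:
  assumes b: "bnd \<rho> \<sigma> l V P" and h: "hp \<rho> \<sigma> l V P \<noteq> 0"
  shows "P \<noteq> 0 \<and> vdeg \<rho> \<sigma> l P = V \<and> lead \<rho> \<sigma> l P = hp \<rho> \<sigma> l V P"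
proof -
  obtain k where "Poly_Mapping.lookup (hp \<rho> \<sigma> l V P) k \<noteq> 0"
    using h by (metis poly_mapping_eqI lookup_zero)
  then have k: "k \<in> Poly_Mapping.keys P" "wdeg \<rho> \<sigma> l k = V"
    by (auto simp: lookup_hp in_keys_iff split: if_splits)
  then have P0: "P \<noteq> 0" by auto
  have "vdeg \<rho> \<sigma> l P = V"
    unfolding vdeg_def
    by (rule Max_eqI) (use b k in \<open>auto simp: bnd_def\<close>)
  then show ?thesis using P0 lead_hp[OF P0] by simp
qed

lemma lmult_eq: "lmult P Q = P * (Q :: 'a::field_char_0 wel)"
proof -
  have "P * Q = ext (\<lambda>p. ext (\<lambda>q. Poly_Mapping.single p 1 * Poly_Mapping.single q 1) Q) P"
  proof -
    have "P * Q = ext (\<lambda>x. Poly_Mapping.single x 1) P * ext (\<lambda>x. Poly_Mapping.single x 1) Q"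
      by (simp add: ext_id)
    also have "\<dots> = ext (\<lambda>p. ext (\<lambda>q. Poly_Mapping.single p 1 * Poly_Mapping.single q 1) Q) P"
      by (subst ext_mult_left, subst ext_mult_right) (rule refl)
    finally show ?thesis .
  qed
  also have "\<dots> = lmult P Q"
  proof (rule poly_mapping_eqI)
    fix k
    have pq: "\<And>p q::int\<times>nat. p + q = (fst p + fst q, snd p + snd q)" by (case_tac p, case_tac q) simp
    show "Poly_Mapping.lookup (ext (\<lambda>p. ext (\<lambda>q. Poly_Mapping.single p 1 * Poly_Mapping.single q 1) Q) P) k = Poly_Mapping.lookup (lmult P Q) k"
      unfolding lmult_def lookup_ext lookup_sum mult_single sum_distrib_left
      by (intro sum.cong refl) (simp add: lookup_single pq[symmetric] mult_when)
  qed
  finally show ?thesis by simp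
qed

lemma lpow_eq: "lpow P m = P ^ m"
  by (induction m) (simp_all add: lmult_eq zero_prod_def[symmetric])

lemma lsmult_eq: "lsmult c P = Poly_Mapping.single 0 c * P"
  unfolding lsmult_def by (simp add: mult_map_scale_conv_mult[symmetric])

lemma wone_deg: "bnd \<rho> \<sigma> l 0 wone \<and> hp \<rho> \<sigma> l 0 (wone :: 'a::field_char_0 wel) = 1"
proof -
  have "hp \<rho> \<sigma> l 0 (Poly_Mapping.single (0,0) 1 :: 'a wel) = (if wdeg \<rho> \<sigma> l (0,0) = 0 then Poly_Mapping.single (0,0) 1 else 0)"
    by (rule hp_single)
  then show ?thesis by (simp add: wone_def bnd_def wdeg_def zero_prod_def[symmetric])
qed

lemma pow_deg:
  assumes l: "l \<ge> 1" and rs: "\<rho> + \<sigma> > 0" and C: "C \<noteq> (0 :: 'a::field_char_0 wel)"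
  shows "bnd \<rho> \<sigma> l (of_nat m * vdeg \<rho> \<sigma> l C) (wpow l C m)
    \<and> hp \<rho> \<sigma> l (of_nat m * vdeg \<rho> \<sigma> l C) (wpow l C m) = (lead \<rho> \<sigma> l C) ^ m"
proof (induction m)
  case 0
  then show ?case using wone_deg[of \<rho> \<sigma> l] by simp
next
  case (Suc m)
  note LC = lead_hp[OF C, of \<rho> \<sigma> l]
  have "bnd \<rho> \<sigma> l (vdeg \<rho> \<sigma> l C + of_nat m * vdeg \<rho> \<sigma> l C) (wmult l C (wpow l C m))
    \<and> hp \<rho> \<sigma> l (vdeg \<rho> \<sigma> l C + of_nat m * vdeg \<rho> \<sigma> l C) (wmult l C (wpow l C m))
      = hp \<rho> \<sigma> l (vdeg \<rho> \<sigma> l C) C * hp \<rho> \<sigma> l (of_nat m * vdeg \<rho> \<sigma> l C) (wpow l C m)"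
    by (rule wmult_deg[OF l rs]) (use LC Suc.IH in auto)
  moreover have "vdeg \<rho> \<sigma> l C + of_nat m * vdeg \<rho> \<sigma> l C = of_nat (Suc m) * vdeg \<rho> \<sigma> l C"
    by (simp add: algebra_simps)
  ultimately show ?case using LC Suc.IH by simp
qed

lemma comm_deg:
  assumes l: "l \<ge> 1" and rs: "\<rho> + \<sigma> > 0" and C: "C \<noteq> (0 :: 'a::field_char_0 wel)"
    and D: "wcomm l C E \<noteq> 0"
  shows "bnd \<rho> \<sigma> l (of_nat m * vdeg \<rho> \<sigma> l C + vdeg \<rho> \<sigma> l (wcomm l C E)) (wcomm l (wpow l C (Suc m)) E)
    \<and> hp \<rho> \<sigma> l (of_nat m * vdeg \<rho> \<sigma> l C + vdeg \<rho> \<sigma> l (wcomm l C E)) (wcomm l (wpow l C (Suc m)) E)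
       = of_nat (Suc m) * (lead \<rho> \<sigma> l C) ^ m * lead \<rho> \<sigma> l (wcomm l C E)"
proof (induction m)
  case 0
  have "wpow l C (Suc 0) = C" using wmult_one[OF l] by simp
  then show ?case using lead_hp[OF D, of \<rho> \<sigma> l] by simp
next
  case (Suc m)
  define vC where "vC = vdeg \<rho> \<sigma> l C"
  define vD where "vD = vdeg \<rho> \<sigma> l (wcomm l C E)"
  define LC where "LC = lead \<rho> \<sigma> l C"
  define LD where "LD = lead \<rho> \<sigma> l (wcomm l C E)"
  define X where "X = wcomm l (wpow l C (Suc m)) E"
  note hC = lead_hp[OF C, of \<rho> \<sigma> l, folded vC_def LC_def]
  note hD = lead_hp[OF D, of \<rho> \<sigma> l, folded vD_def LD_def]
  note IH = Suc.IH[folded vC_def vD_def LC_def LD_def X_def]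
  note P = pow_deg[OF l rs C, of "Suc m", folded vC_def LC_def]
  have e: "wcomm l (wpow l C (Suc (Suc m))) E = wmult l C X + wmult l (wcomm l C E) (wpow l C (Suc m))"
    unfolding X_def by (rule comm_step[OF l])
  have A: "bnd \<rho> \<sigma> l (vC + (of_nat m * vC + vD)) (wmult l C X)
    \<and> hp \<rho> \<sigma> l (vC + (of_nat m * vC + vD)) (wmult l C X) = hp \<rho> \<sigma> l vC C * hp \<rho> \<sigma> l (of_nat m * vC + vD) X"
    by (rule wmult_deg[OF l rs]) (use hC IH in auto)
  have B: "bnd \<rho> \<sigma> l (vD + of_nat (Suc m) * vC) (wmult l (wcomm l C E) (wpow l C (Suc m)))
    \<and> hp \<rho> \<sigma> l (vD + of_nat (Suc m) * vC) (wmult l (wcomm l C E) (wpow l C (Suc m)))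
       = hp \<rho> \<sigma> l vD (wcomm l C E) * hp \<rho> \<sigma> l (of_nat (Suc m) * vC) (wpow l C (Suc m))"
    by (rule wmult_deg[OF l rs]) (use hD P in auto)
  have V1: "vC + (of_nat m * vC + vD) = of_nat (Suc m) * vC + vD" by (simp add: algebra_simps)
  have V2: "vD + of_nat (Suc m) * vC = of_nat (Suc m) * vC + vD" by (simp add: algebra_simps)
  have "bnd \<rho> \<sigma> l (of_nat (Suc m) * vC + vD) (wcomm l (wpow l C (Suc (Suc m))) E)"
    unfolding e by (rule bnd_add[OF conjunct1[OF A[unfolded V1]] conjunct1[OF B[unfolded V2]]])
  moreover have "hp \<rho> \<sigma> l (of_nat (Suc m) * vC + vD) (wcomm l (wpow l C (Suc (Suc m))) E)
      = LC * (of_nat (Suc m) * LC ^ m * LD) + LD * LC ^ Suc m"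
    unfolding e hp_add conjunct2[OF A[unfolded V1]] conjunct2[OF B[unfolded V2]] using hC hD IH P by simp
  moreover have "LC * (of_nat (Suc m) * LC ^ m * LD) + LD * LC ^ Suc m = of_nat (Suc (Suc m)) * LC ^ Suc m * LD"
    by (simp add: algebra_simps)
  ultimately show ?case unfolding vC_def vD_def LC_def LD_def by simp
qed

theorem lemma2p13:
  fixes C E :: "'a::field_char_0 wel" and l m :: nat and \<rho> \<sigma> :: int
  assumes "l \<ge> 1" and "C \<noteq> 0" and "E \<noteq> 0" and "m \<ge> 1"
    and "gcd \<rho> \<sigma> = 1" and "\<rho> + \<sigma> > 0"
    and "wcomm l C E \<noteq> 0"
  shows "wcomm l (wpow l C m) E \<noteq> 0
    \<and> lead \<rho> \<sigma> l (wcomm l (wpow l C m) E)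
        = lsmult (of_nat m) (lmult (lpow (lead \<rho> \<sigma> l C) (m - 1)) (lead \<rho> \<sigma> l (wcomm l C E)))
    \<and> (wbracket \<rho> \<sigma> l (wpow l C m) E \<noteq> 0 \<longleftrightarrow> wbracket \<rho> \<sigma> l C E \<noteq> 0)"
proof -
  note l = assms(1) and C = assms(2) and rs = assms(6) and D = assms(7)
  obtain k where m: "m = Suc k" using assms(4) by (cases m) auto
  define vC where "vC = vdeg \<rho> \<sigma> l C"
  define vD where "vD = vdeg \<rho> \<sigma> l (wcomm l C E)"
  define LC where "LC = lead \<rho> \<sigma> l C"
  define LD where "LD = lead \<rho> \<sigma> l (wcomm l C E)"
  define X where "X = wcomm l (wpow l C m) E"
  have LC0: "LC \<noteq> 0" unfolding LC_def by (rule lead_nz[OF C])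
  have LD0: "LD \<noteq> 0" unfolding LD_def by (rule lead_nz[OF D])
  have m0: "(of_nat m :: 'a wel) \<noteq> 0" unfolding of_nat_eq_0_iff using m by simp
  have H0: "of_nat m * LC ^ k * LD \<noteq> 0" using LC0 LD0 m0 by simp
  note CD = comm_deg[OF l rs C D, of k, folded vC_def vD_def LC_def LD_def m, folded X_def]
  from hp_char[OF conjunct1[OF CD]] CD H0
  have X: "X \<noteq> 0" "vdeg \<rho> \<sigma> l X = of_nat k * vC + vD" "lead \<rho> \<sigma> l X = of_nat m * LC ^ k * LD"
    by auto
  note PD = pow_deg[OF l rs C, of m, folded vC_def LC_def]
  from hp_char[OF conjunct1[OF PD]] PD LC0
  have vP: "vdeg \<rho> \<sigma> l (wpow l C m) = of_nat m * vC" by auto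
  have lead_eq: "lsmult (of_nat m) (lmult (lpow LC (m - 1)) LD) = of_nat m * LC ^ k * LD"
  proof -
    have mk: "m - 1 = k" using m by simp
    show ?thesis unfolding lsmult_eq lmult_eq lpow_eq single_of_nat mk by (simp only: mult.assoc)
  qed
  have br1: "wbracket \<rho> \<sigma> l (wpow l C m) E \<noteq> 0 \<longleftrightarrow> \<not> (of_nat k * vC + vD < of_nat m * vC + vdeg \<rho> \<sigma> l E - of_int (\<rho> + \<sigma>))"
    unfolding wbracket_def using X H0 vP by (simp add: X_def)
  have br2: "wbracket \<rho> \<sigma> l C E \<noteq> 0 \<longleftrightarrow> \<not> (vD < vC + vdeg \<rho> \<sigma> l E - of_int (\<rho> + \<sigma>))"
    unfolding wbracket_def using D LD0 by (simp add: vD_def vC_def LD_def)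
  have "(of_nat m :: rat) * vC = of_nat k * vC + vC" by (simp add: m algebra_simps)
  then have "wbracket \<rho> \<sigma> l (wpow l C m) E \<noteq> 0 \<longleftrightarrow> wbracket \<rho> \<sigma> l C E \<noteq> 0"
    using br1 br2 by linarith
  then show ?thesis using X lead_eq by (simp add: X_def LC_def LD_def)
qed

end
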